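(* Let $a,b,c,d\in\{1,\dots,\ell\}$ be distinct. For all positive integers $m,n,r,s$, in $A(\mathcal{H}^+)$ we have $[S_{abcd}(m,n,r,s)]=(-1)^{m+n+r+s}[S_{abcd}(1,1,1,1)]$, where $S_{abcd}(m,n,r,s)=h_a(-m)h_b(-n)h_c(-r)h_d(-s)\mathbf{1}$.
   Context: $\mathfrak{h}$ is an $\ell$-dimensional complex space with orthonormal basis $h_1,\dots,h_\ell$; $\mathcal{H}=M(1,0)$ is the free bosonic vertex operator algebra generated by Heisenberg modes $h(n)$ acting on the vacuum $\mathbf{1}$; $\mathcal{H}^+$ is the fixed-point subalgebra of the automorphism induced by $h\mapsto-h$. $A(\mathcal{H}^+)=\mathcal{H}^+/O(\mathcal{H}^+)$ is Zhu's algebra, $O(\mathcal{H}^+)$ spanned by $u\circ v=\sum_{i\ge0}\binom{\mathrm{wt}\,u}{i}u_{i-2}v$, product induced by $u*v=\sum_{i\ge0}\binom{\mathrm{wt}\,u}{i}u_{i-1}v$; $[u]=u+O(\mathcal{H}^+)$. *)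

theory Defs
  imports Complex_Main "HOL-Library.Multiset" "HOL-Library.Function_Algebras"
          "HOL-Library.Product_Lexorder"
begin

text \<open>A monomial is a multiset of pairs (i,n), n \<ge> 1, standing for the
  product of the creation operators h_i(-n); the basis vector for the monomial
  M is the product of the h_i(-n), (i,n) in M, applied to the vacuum.\<close>

type_synonym mon = "(nat \<times> nat) multiset"
type_synonym vec = "mon \<Rightarrow> complex"

definition smul :: "complex \<Rightarrow> vec \<Rightarrow> vec" (infixr "*\<^sub>v" 75) where
  "c *\<^sub>v v = (\<lambda>M. c * v M)"

definition vac :: vec where
  "vac = (\<lambda>M. if M = {#} then 1 else 0)"

text \<open>Heisenberg modes h_i(p), p an integer:
  h_i(-n) (n>0) is multiplication by the variable (i,n);
  h_i(n) (n>0) is n times the partial derivative in the variable (i,n);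
  h_i(0) = 0 (zero momentum).  Hence [h_i(p),h_j(q)] = p \<delta>_ij \<delta>_{p+q,0}.\<close>

definition hmode :: "nat \<Rightarrow> int \<Rightarrow> vec \<Rightarrow> vec" where
  "hmode i p v =
     (if p < 0 then (\<lambda>M. if (i, nat (-p)) \<in># M then v (M - {#(i, nat (-p))#}) else 0)
      else if p > 0 then (\<lambda>M. of_int p * of_nat (count M (i, nat p) + 1) * v (M + {#(i, nat p)#}))
      else 0)"

definition fsum :: "(nat \<Rightarrow> vec) \<Rightarrow> vec" where
  "fsum t = sum t {j. t j \<noteq> 0}"

text \<open>Modes of the vertex operator of the basis vector
  h_{i1}(-n1) ... h_{ik}(-nk) 1 (given as a word), defined via the iterate
  formula (a_p u)_q = \<Sum>_{j\<ge>0} (-1)^j binom(p,j) (a_{p-j} u_{q+j} - (-1)^p u_{p+q-j} a_j)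
  with p = -n, where (-1)^j binom(-n,j) = binom(n+j-1,j), and 1_q = \<delta>_{q,-1}.\<close>
primrec wmode :: "(nat \<times> nat) list \<Rightarrow> int \<Rightarrow> vec \<Rightarrow> vec" where
  "wmode [] k v = (if k = -1 then v else 0)"
| "wmode (x # w) k v =
     fsum (\<lambda>j. of_nat ((snd x + j - 1) choose j) *\<^sub>v
        (hmode (fst x) (- int (snd x) - int j) (wmode w (k + int j) v)
         - ((-1) ^ snd x) *\<^sub>v wmode w (- int (snd x) + k - int j) (hmode (fst x) (int j) v)))"

definition vmode :: "vec \<Rightarrow> int \<Rightarrow> vec \<Rightarrow> vec" where
  "vmode u k v = sum (\<lambda>M. u M *\<^sub>v wmode (sorted_list_of_multiset M) k v) {M. u M \<noteq> 0}"

definition wtm :: "mon \<Rightarrow> nat" where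
  "wtm M = sum_mset (image_mset snd M)"

text \<open>M(1,0) for an \<ell>-dimensional h with orthonormal basis h_1..h_\<ell>.\<close>
definition Fock :: "nat \<Rightarrow> vec set" where
  "Fock l = {v. finite {M. v M \<noteq> 0} \<and>
      (\<forall>M. v M \<noteq> 0 \<longrightarrow> (\<forall>x\<in>#M. 1 \<le> fst x \<and> fst x \<le> l \<and> 1 \<le> snd x))}"

text \<open>H^+: fixed points of the automorphism induced by h \<mapsto> -h, which acts
  by (-1)^(number of creation operators) on monomials.\<close>
definition Hplus :: "nat \<Rightarrow> vec set" where
  "Hplus l = {v \<in> Fock l. \<forall>M. v M \<noteq> 0 \<longrightarrow> even (size M)}"

definition homog :: "nat \<Rightarrow> vec \<Rightarrow> bool" where
  "homog w u \<longleftrightarrow> (\<forall>M. u M \<noteq> 0 \<longrightarrow> wtm M = w)"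

text \<open>u \<circ> v for u homogeneous of weight w.\<close>
definition zcirc :: "nat \<Rightarrow> vec \<Rightarrow> vec \<Rightarrow> vec" where
  "zcirc w u v = (\<Sum>i\<le>w. of_nat (w choose i) *\<^sub>v vmode u (int i - 2) v)"

definition zstar :: "nat \<Rightarrow> vec \<Rightarrow> vec \<Rightarrow> vec" where
  "zstar w u v = (\<Sum>i\<le>w. of_nat (w choose i) *\<^sub>v vmode u (int i - 1) v)"

inductive_set OH :: "nat \<Rightarrow> vec set" for l :: nat where
  zero: "0 \<in> OH l"
| gen: "u \<in> Hplus l \<Longrightarrow> homog w u \<Longrightarrow> v \<in> Hplus l \<Longrightarrow> zcirc w u v \<in> OH l"
| add: "x \<in> OH l \<Longrightarrow> y \<in> OH l \<Longrightarrow> x + y \<in> OH l"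
| scale: "x \<in> OH l \<Longrightarrow> c *\<^sub>v x \<in> OH l"

text \<open>Equality of classes [u] = [v] in A(H^+) = H^+/O(H^+).\<close>
definition zhu_eq :: "nat \<Rightarrow> vec \<Rightarrow> vec \<Rightarrow> bool" where
  "zhu_eq l u v \<longleftrightarrow> u \<in> Hplus l \<and> v \<in> Hplus l \<and> u - v \<in> OH l"

definition S :: "nat \<Rightarrow> nat \<Rightarrow> nat \<Rightarrow> nat \<Rightarrow> nat \<Rightarrow> nat \<Rightarrow> nat \<Rightarrow> nat \<Rightarrow> vec" where
  "S a b c d m n r s =
     hmode a (- int m) (hmode b (- int n) (hmode c (- int r) (hmode d (- int s) vac)))"

end

theory Submission
  imports Defs
begin

definition mv :: "mon \<Rightarrow> vec" where
  "mv M = (\<lambda>N. if N = M then 1 else 0)"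

lemma vac_mono: "vac = mv {#}"
  by (simp add: vac_def mv_def)

lemma hmode_neg_mv:
  assumes "p < 0"
  shows "hmode i p (mv M) = mv (add_mset (i, nat (-p)) M)"
proof
  fix N
  show "hmode i p (mv M) N = mv (add_mset (i, nat (-p)) M) N"
    using assms by (auto simp: hmode_def mv_def)
qed

lemma hmode_nonneg_mv:
  assumes "0 \<le> p" "i \<notin> fst ` set_mset M"
  shows "hmode i p (mv M) = 0"
proof
  fix N
  show "hmode i p (mv M) N = 0 N"
  proof (cases "p = 0")
    case True then show ?thesis by (simp add: hmode_def)
  next
    case False
    have "N + {#(i, nat p)#} \<noteq> M"
    proof
      assume "N + {#(i, nat p)#} = M"
      then have "(i, nat p) \<in># M" by auto
      then show False using assms(2) by force
    qed
    then show ?thesis using assms False by (simp add: hmode_def mv_def)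
  qed
qed

lemma hmode_zero [simp]: "hmode i p 0 = 0"
  by (auto simp: hmode_def fun_eq_iff)

lemma hmode_smul: "hmode i p (c *\<^sub>v v) = c *\<^sub>v hmode i p v"
  by (auto simp: hmode_def smul_def fun_eq_iff)

lemma smul_zero [simp]: "c *\<^sub>v (0::vec) = 0"
  by (simp add: smul_def fun_eq_iff)

lemma smul_one [simp]: "1 *\<^sub>v v = v"
  by (simp add: smul_def)

lemma fsum_zero: "(\<And>j. t j = 0) \<Longrightarrow> fsum t = 0"
  by (simp add: fsum_def)

lemma fsum_0 [simp]: "fsum (\<lambda>j. 0) = 0"
  by (simp add: fsum_def)

lemma fsum_eq:
  assumes "finite A" "\<And>j. j \<notin> A \<Longrightarrow> t j = 0"
  shows "fsum t = sum t A"
  unfolding fsum_def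
  by (rule sum.mono_neutral_left) (use assms in auto)

lemma wmode_zero [simp]: "wmode w k 0 = 0"
  by (induction w arbitrary: k) (auto intro!: fsum_zero)

lemma W1c:
  assumes "0 \<le> k" "j2 \<notin> fst ` set_mset M"
  shows "wmode [(j2,q)] k (mv M) = 0"
  using assms by (auto intro!: fsum_zero simp: hmode_nonneg_mv)

lemma W1a:
  assumes "0 < q" "j2 \<notin> fst ` set_mset M"
  shows "wmode [(j2,q)] (-1) (mv M) = mv (add_mset (j2,q) M)"
proof -
  have "wmode [(j2,q)] (-1) (mv M) = sum (\<lambda>j. of_nat ((q + j - 1) choose j) *\<^sub>v
        (hmode j2 (- int q - int j) (wmode [] (-1 + int j) (mv M))
         - ((-1) ^ q) *\<^sub>v wmode [] (- int q + -1 - int j) (hmode j2 (int j) (mv M)))) {0}"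
    unfolding wmode.simps(2) fst_conv snd_conv
    by (rule fsum_eq) (auto simp: hmode_nonneg_mv assms)
  also have "\<dots> = mv (add_mset (j2,q) M)"
    using assms by (simp add: hmode_nonneg_mv hmode_neg_mv)
  finally show ?thesis .
qed

lemma W1b:
  assumes "0 < q" "j2 \<notin> fst ` set_mset M"
  shows "wmode [(j2,q)] (-2) (mv M) = of_nat q *\<^sub>v mv (add_mset (j2,q+1) M)"
proof -
  have "wmode [(j2,q)] (-2) (mv M) = sum (\<lambda>j. of_nat ((q + j - 1) choose j) *\<^sub>v
        (hmode j2 (- int q - int j) (wmode [] (-2 + int j) (mv M))
         - ((-1) ^ q) *\<^sub>v wmode [] (- int q + -2 - int j) (hmode j2 (int j) (mv M)))) {1}"
    unfolding wmode.simps(2) fst_conv snd_conv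
    by (rule fsum_eq) (auto simp: hmode_nonneg_mv assms)
  also have "\<dots> = of_nat q *\<^sub>v mv (add_mset (j2,q+1) M)"
    using assms by (simp add: hmode_nonneg_mv hmode_neg_mv nat_add_distrib)
  finally show ?thesis .
qed


declare wmode.simps(2)[simp del]

lemma W2c:
  assumes "0 \<le> k" "i \<notin> fst ` set_mset M" "j2 \<notin> fst ` set_mset M"
  shows "wmode [(i,p),(j2,q)] k (mv M) = 0"
  unfolding wmode.simps(2)[of "(i,p)"] fst_conv snd_conv
  using assms by (auto intro!: fsum_zero simp: hmode_nonneg_mv W1c)

lemma W2a:
  assumes "0 < p" "0 < q" "i \<notin> fst ` set_mset M" "j2 \<notin> fst ` set_mset M"
  shows "wmode [(i,p),(j2,q)] (-1) (mv M) = mv (add_mset (i,p) (add_mset (j2,q) M))"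
proof -
  have "wmode [(i,p),(j2,q)] (-1) (mv M) = sum (\<lambda>j. of_nat ((p + j - 1) choose j) *\<^sub>v
        (hmode i (- int p - int j) (wmode [(j2,q)] (-1 + int j) (mv M))
         - ((-1) ^ p) *\<^sub>v wmode [(j2,q)] (- int p + -1 - int j) (hmode i (int j) (mv M)))) {0}"
    unfolding wmode.simps(2)[of "(i,p)"] fst_conv snd_conv
    by (rule fsum_eq) (auto simp: hmode_nonneg_mv assms W1c)
  also have "\<dots> = mv (add_mset (i,p) (add_mset (j2,q) M))"
    using assms by (simp add: hmode_nonneg_mv hmode_neg_mv W1a)
  finally show ?thesis .
qed

lemma W2b:
  assumes "0 < p" "0 < q" "i \<notin> fst ` set_mset M" "j2 \<notin> fst ` set_mset M"
  shows "wmode [(i,p),(j2,q)] (-2) (mv M) =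
    of_nat q *\<^sub>v mv (add_mset (i,p) (add_mset (j2,q+1) M))
    + of_nat p *\<^sub>v mv (add_mset (i,p+1) (add_mset (j2,q) M))"
proof -
  have "wmode [(i,p),(j2,q)] (-2) (mv M) = sum (\<lambda>j. of_nat ((p + j - 1) choose j) *\<^sub>v
        (hmode i (- int p - int j) (wmode [(j2,q)] (-2 + int j) (mv M))
         - ((-1) ^ p) *\<^sub>v wmode [(j2,q)] (- int p + -2 - int j) (hmode i (int j) (mv M)))) {0,1}"
    unfolding wmode.simps(2)[of "(i,p)"] fst_conv snd_conv
    by (rule fsum_eq) (auto simp: hmode_nonneg_mv assms W1c)
  also have "\<dots> = of_nat q *\<^sub>v mv (add_mset (i,p) (add_mset (j2,q+1) M))
    + of_nat p *\<^sub>v mv (add_mset (i,p+1) (add_mset (j2,q) M))"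
    using assms by (simp add: hmode_nonneg_mv hmode_neg_mv W1a W1b hmode_smul nat_add_distrib)
  finally show ?thesis .
qed

lemma supp_mv: "{N. mv M N \<noteq> 0} = {M}"
  by (auto simp: mv_def)

lemma vmode_mv2:
  "vmode (mv {#x, y#}) k v = (if x \<le> y then wmode [x, y] k v else wmode [y, x] k v)"
  by (simp add: vmode_def supp_mv mv_def)


lemma V2c:
  assumes "0 \<le> k" "i \<notin> fst ` set_mset M" "j2 \<notin> fst ` set_mset M"
  shows "vmode (mv {#(i,p),(j2,q)#}) k (mv M) = 0"
  using assms by (simp add: vmode_mv2 W2c)

lemma V2a:
  assumes "0 < p" "0 < q" "i \<notin> fst ` set_mset M" "j2 \<notin> fst ` set_mset M"
  shows "vmode (mv {#(i,p),(j2,q)#}) (-1) (mv M) = mv (add_mset (i,p) (add_mset (j2,q) M))"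
  using assms by (simp add: vmode_mv2 W2a add_mset_commute)

lemma V2b:
  assumes "0 < p" "0 < q" "i \<notin> fst ` set_mset M" "j2 \<notin> fst ` set_mset M"
  shows "vmode (mv {#(i,p),(j2,q)#}) (-2) (mv M) =
    of_nat q *\<^sub>v mv (add_mset (i,p) (add_mset (j2,q+1) M))
    + of_nat p *\<^sub>v mv (add_mset (i,p+1) (add_mset (j2,q) M))"
  using assms by (simp add: vmode_mv2 W2b add_mset_commute add.commute)

lemma Z:
  assumes "0 < p" "0 < q" "i \<notin> fst ` set_mset M" "j2 \<notin> fst ` set_mset M"
  shows "zcirc (p+q) (mv {#(i,p),(j2,q)#}) (mv M) =
    of_nat q *\<^sub>v mv (add_mset (i,p) (add_mset (j2,q+1) M))
    + of_nat p *\<^sub>v mv (add_mset (i,p+1) (add_mset (j2,q) M))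
    + of_nat (p+q) *\<^sub>v mv (add_mset (i,p) (add_mset (j2,q) M))"
proof -
  let ?t = "\<lambda>x. of_nat ((p+q) choose x) *\<^sub>v vmode (mv {#(i,p),(j2,q)#}) (int x - 2) (mv M)"
  have "zcirc (p+q) (mv {#(i,p),(j2,q)#}) (mv M) = sum ?t {..p+q}"
    by (simp add: zcirc_def)
  also have "\<dots> = sum ?t {0,1}"
  proof (rule sum.mono_neutral_right)
    show "\<forall>x\<in>{..p + q} - {0, 1}. ?t x = 0"
      using assms by (auto simp: V2c)
  qed (use assms in auto)
  also have "\<dots> = ?t 0 + ?t 1" by simp
  also have "\<dots> = of_nat q *\<^sub>v mv (add_mset (i,p) (add_mset (j2,q+1) M))
    + of_nat p *\<^sub>v mv (add_mset (i,p+1) (add_mset (j2,q) M))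
    + of_nat (p+q) *\<^sub>v mv (add_mset (i,p) (add_mset (j2,q) M))"
    using V2a[OF assms] V2b[OF assms] by simp
  finally show ?thesis .
qed

lemma mv_Hplus:
  assumes "\<forall>x\<in>#M. 1 \<le> fst x \<and> fst x \<le> l \<and> 1 \<le> snd x" "even (size M)"
  shows "mv M \<in> Hplus l"
  using assms by (auto simp: Hplus_def Fock_def supp_mv mv_def)

lemma OH_diff: "x \<in> OH l \<Longrightarrow> y \<in> OH l \<Longrightarrow> x - y \<in> OH l"
proof -
  assume "x \<in> OH l" "y \<in> OH l"
  then have "x + (-1) *\<^sub>v y \<in> OH l" by (intro OH.add OH.scale)
  moreover have "x + (-1) *\<^sub>v y = x - y" by (simp add: smul_def fun_eq_iff)
  ultimately show ?thesis by simp
qed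

lemma pair:
  assumes "i \<in> {1..l}" "j \<in> {1..l}" "k \<in> {1..l}" "e \<in> {1..l}" "distinct [i,j,k,e]"
    "0 < p" "0 < q" "0 < t" "0 < s"
  shows "of_nat q *\<^sub>v mv {#(i,p),(j,q+1),(k,t),(e,s)#}
    + of_nat p *\<^sub>v mv {#(i,p+1),(j,q),(k,t),(e,s)#}
    + of_nat (p+q) *\<^sub>v mv {#(i,p),(j,q),(k,t),(e,s)#} \<in> OH l"
proof -
  have "zcirc (p+q) (mv {#(i,p),(j,q)#}) (mv {#(k,t),(e,s)#}) \<in> OH l"
  proof (rule OH.gen)
    show "mv {#(i,p),(j,q)#} \<in> Hplus l" using assms by (intro mv_Hplus) auto
    show "mv {#(k,t),(e,s)#} \<in> Hplus l" using assms by (intro mv_Hplus) auto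
    show "homog (p+q) (mv {#(i,p),(j,q)#})" by (simp add: homog_def mv_def wtm_def)
  qed
  then show ?thesis using assms by (simp add: Z)
qed


lemma step:
  assumes "i \<in> {1..l}" "j \<in> {1..l}" "k \<in> {1..l}" "e \<in> {1..l}" "distinct [i,j,k,e]"
    "0 < p" "0 < q" "0 < t" "0 < s"
  shows "mv {#(i,p+1),(j,q),(k,t),(e,s)#} + mv {#(i,p),(j,q),(k,t),(e,s)#} \<in> OH l"
proof -
  have R1: "of_nat q *\<^sub>v mv {#(i,p),(j,q+1),(k,t),(e,s)#}
    + of_nat p *\<^sub>v mv {#(i,p+1),(j,q),(k,t),(e,s)#}
    + of_nat (p+q) *\<^sub>v mv {#(i,p),(j,q),(k,t),(e,s)#} \<in> OH l"
    using assms by (intro pair) auto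
  have R2: "of_nat t *\<^sub>v mv {#(i,p),(k,t+1),(j,q),(e,s)#}
    + of_nat p *\<^sub>v mv {#(i,p+1),(k,t),(j,q),(e,s)#}
    + of_nat (p+t) *\<^sub>v mv {#(i,p),(k,t),(j,q),(e,s)#} \<in> OH l"
    using assms by (intro pair) auto
  have R3: "of_nat t *\<^sub>v mv {#(j,q),(k,t+1),(i,p),(e,s)#}
    + of_nat q *\<^sub>v mv {#(j,q+1),(k,t),(i,p),(e,s)#}
    + of_nat (q+t) *\<^sub>v mv {#(j,q),(k,t),(i,p),(e,s)#} \<in> OH l"
    using assms by (intro pair) auto
  have "(1 / (2 * of_nat p)) *\<^sub>v (
    (of_nat q *\<^sub>v mv {#(i,p),(j,q+1),(k,t),(e,s)#}
    + of_nat p *\<^sub>v mv {#(i,p+1),(j,q),(k,t),(e,s)#}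
    + of_nat (p+q) *\<^sub>v mv {#(i,p),(j,q),(k,t),(e,s)#})
    + (of_nat t *\<^sub>v mv {#(i,p),(k,t+1),(j,q),(e,s)#}
    + of_nat p *\<^sub>v mv {#(i,p+1),(k,t),(j,q),(e,s)#}
    + of_nat (p+t) *\<^sub>v mv {#(i,p),(k,t),(j,q),(e,s)#})
    - (of_nat t *\<^sub>v mv {#(j,q),(k,t+1),(i,p),(e,s)#}
    + of_nat q *\<^sub>v mv {#(j,q+1),(k,t),(i,p),(e,s)#}
    + of_nat (q+t) *\<^sub>v mv {#(j,q),(k,t),(i,p),(e,s)#})) \<in> OH l"
    by (rule OH.scale, rule OH_diff[OF OH.add[OF R1 R2] R3])
  moreover have "(1 / (2 * of_nat p)) *\<^sub>v (
    (of_nat q *\<^sub>v mv {#(i,p),(j,q+1),(k,t),(e,s)#}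
    + of_nat p *\<^sub>v mv {#(i,p+1),(j,q),(k,t),(e,s)#}
    + of_nat (p+q) *\<^sub>v mv {#(i,p),(j,q),(k,t),(e,s)#})
    + (of_nat t *\<^sub>v mv {#(i,p),(k,t+1),(j,q),(e,s)#}
    + of_nat p *\<^sub>v mv {#(i,p+1),(k,t),(j,q),(e,s)#}
    + of_nat (p+t) *\<^sub>v mv {#(i,p),(k,t),(j,q),(e,s)#})
    - (of_nat t *\<^sub>v mv {#(j,q),(k,t+1),(i,p),(e,s)#}
    + of_nat q *\<^sub>v mv {#(j,q+1),(k,t),(i,p),(e,s)#}
    + of_nat (q+t) *\<^sub>v mv {#(j,q),(k,t),(i,p),(e,s)#}))
    = mv {#(i,p+1),(j,q),(k,t),(e,s)#} + mv {#(i,p),(j,q),(k,t),(e,s)#}"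
    using assms by (simp add: fun_eq_iff smul_def add_mset_commute field_simps)
  ultimately show ?thesis by simp
qed

lemma chain:
  assumes "\<And>x. 1 \<le> x \<Longrightarrow> f (Suc x) - f x \<in> OH l" "1 \<le> m"
  shows "f m - f 1 \<in> OH l"
  using assms(2)
proof (induction m rule: nat_induct_at_least)
  case base
  have "(0::vec) \<in> OH l" by (rule OH.zero)
  then show ?case by (metis diff_self)
next
  case (Suc x)
  have "(f (Suc x) - f x) + (f x - f 1) \<in> OH l"
    by (rule OH.add[OF assms(1)[OF Suc.hyps] Suc.IH])
  moreover have "(f (Suc x) - f x) + (f x - f 1) = f (Suc x) - f 1"
    by (metis add_diff_cancel_left' diff_add_cancel add_diff_eq add.commute)
  ultimately show ?case by metis
qed

lemma mS:
  assumes "0 < m" "0 < n" "0 < r" "0 < s"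
  shows "S a b c d m n r s = mv {#(a,m),(b,n),(c,r),(d,s)#}"
  using assms by (simp add: S_def vac_mono hmode_neg_mv)

theorem lemma4p1p6:
  fixes l a b c d m n r s :: nat
  assumes "a \<in> {1..l}" "b \<in> {1..l}" "c \<in> {1..l}" "d \<in> {1..l}"
    and "distinct [a, b, c, d]"
    and "0 < m" "0 < n" "0 < r" "0 < s"
  shows "zhu_eq l (S a b c d m n r s) (((-1) ^ (m + n + r + s)) *\<^sub>v S a b c d 1 1 1 1)"
proof -
  define Q where "Q x y z w = ((-1::complex) ^ (x+y+z+w)) *\<^sub>v mv {#(a,x),(b,y),(c,z),(d,w)#}"
    for x y z w
  have sA: "Q (Suc x) y z w - Q x y z w \<in> OH l" if "1 \<le> x" "1 \<le> y" "1 \<le> z" "1 \<le> w" for x y z w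
  proof -
    have "((-1::complex) ^ (x+y+z+w+1)) *\<^sub>v
       (mv {#(a,x+1),(b,y),(c,z),(d,w)#} + mv {#(a,x),(b,y),(c,z),(d,w)#}) \<in> OH l"
      using assms that by (intro OH.scale step) auto
    moreover have "Q (Suc x) y z w - Q x y z w = ((-1::complex) ^ (x+y+z+w+1)) *\<^sub>v
       (mv {#(a,x+1),(b,y),(c,z),(d,w)#} + mv {#(a,x),(b,y),(c,z),(d,w)#})"
      by (simp add: Q_def smul_def fun_eq_iff algebra_simps add_mset_commute)
    ultimately show ?thesis by simp
  qed
  have sB: "Q x (Suc y) z w - Q x y z w \<in> OH l" if "1 \<le> x" "1 \<le> y" "1 \<le> z" "1 \<le> w" for x y z w
  proof -
    have "((-1::complex) ^ (x+y+z+w+1)) *\<^sub>v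
       (mv {#(b,y+1),(a,x),(c,z),(d,w)#} + mv {#(b,y),(a,x),(c,z),(d,w)#}) \<in> OH l"
      using assms that by (intro OH.scale step) auto
    moreover have "Q x (Suc y) z w - Q x y z w = ((-1::complex) ^ (x+y+z+w+1)) *\<^sub>v
       (mv {#(b,y+1),(a,x),(c,z),(d,w)#} + mv {#(b,y),(a,x),(c,z),(d,w)#})"
      by (simp add: Q_def smul_def fun_eq_iff algebra_simps add_mset_commute)
    ultimately show ?thesis by simp
  qed
  have sC: "Q x y (Suc z) w - Q x y z w \<in> OH l" if "1 \<le> x" "1 \<le> y" "1 \<le> z" "1 \<le> w" for x y z w
  proof -
    have "((-1::complex) ^ (x+y+z+w+1)) *\<^sub>v
       (mv {#(c,z+1),(a,x),(b,y),(d,w)#} + mv {#(c,z),(a,x),(b,y),(d,w)#}) \<in> OH l"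
      using assms that by (intro OH.scale step) auto
    moreover have "Q x y (Suc z) w - Q x y z w = ((-1::complex) ^ (x+y+z+w+1)) *\<^sub>v
       (mv {#(c,z+1),(a,x),(b,y),(d,w)#} + mv {#(c,z),(a,x),(b,y),(d,w)#})"
      by (simp add: Q_def smul_def fun_eq_iff algebra_simps add_mset_commute)
    ultimately show ?thesis by simp
  qed
  have sD: "Q x y z (Suc w) - Q x y z w \<in> OH l" if "1 \<le> x" "1 \<le> y" "1 \<le> z" "1 \<le> w" for x y z w
  proof -
    have "((-1::complex) ^ (x+y+z+w+1)) *\<^sub>v
       (mv {#(d,w+1),(a,x),(b,y),(c,z)#} + mv {#(d,w),(a,x),(b,y),(c,z)#}) \<in> OH l"
      using assms that by (intro OH.scale step) auto
    moreover have "Q x y z (Suc w) - Q x y z w = ((-1::complex) ^ (x+y+z+w+1)) *\<^sub>v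
       (mv {#(d,w+1),(a,x),(b,y),(c,z)#} + mv {#(d,w),(a,x),(b,y),(c,z)#})"
      by (simp add: Q_def smul_def fun_eq_iff algebra_simps add_mset_commute)
    ultimately show ?thesis by simp
  qed
  have cA: "Q m n r s - Q 1 n r s \<in> OH l"
    using assms by (intro chain[where f = "\<lambda>x. Q x n r s"] sA) auto
  have cB: "Q 1 n r s - Q 1 1 r s \<in> OH l"
    using assms by (intro chain[where f = "\<lambda>x. Q 1 x r s"] sB) auto
  have cC: "Q 1 1 r s - Q 1 1 1 s \<in> OH l"
    using assms by (intro chain[where f = "\<lambda>x. Q 1 1 x s"] sC) auto
  have cD: "Q 1 1 1 s - Q 1 1 1 1 \<in> OH l"
    using assms by (intro chain[where f = "\<lambda>x. Q 1 1 1 x"] sD) auto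
  have "((-1::complex) ^ (m+n+r+s)) *\<^sub>v ((Q m n r s - Q 1 n r s) + (Q 1 n r s - Q 1 1 r s)
     + (Q 1 1 r s - Q 1 1 1 s) + (Q 1 1 1 s - Q 1 1 1 1)) \<in> OH l"
    using cA cB cC cD by (intro OH.scale OH.add)
  moreover have sq: "((-1::complex) ^ (m+n+r+s)) * ((-1) ^ (m+n+r+s)) = 1"
    by (simp flip: power_add)
  moreover have "((-1::complex) ^ (m+n+r+s)) *\<^sub>v ((Q m n r s - Q 1 n r s) + (Q 1 n r s - Q 1 1 r s)
     + (Q 1 1 r s - Q 1 1 1 s) + (Q 1 1 1 s - Q 1 1 1 1))
     = S a b c d m n r s - ((-1) ^ (m + n + r + s)) *\<^sub>v S a b c d 1 1 1 1"
    using assms sq by (simp add: mS Q_def smul_def fun_eq_iff algebra_simps)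
  ultimately have "S a b c d m n r s - ((-1) ^ (m + n + r + s)) *\<^sub>v S a b c d 1 1 1 1 \<in> OH l"
    by simp
  moreover have "S a b c d m n r s \<in> Hplus l" "S a b c d 1 1 1 1 \<in> Hplus l"
    using assms by (auto simp: mS intro!: mv_Hplus)
  moreover have "((-1) ^ (m + n + r + s)) *\<^sub>v S a b c d 1 1 1 1 \<in> Hplus l"
    using \<open>S a b c d 1 1 1 1 \<in> Hplus l\<close> by (auto simp: Hplus_def Fock_def smul_def)
  ultimately show ?thesis by (simp add: zhu_eq_def)
qed

end
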